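(* Let $n\ge 3$ and let $\mathcal{H}$ be the associating hypergraph on $M(D_n,2)$. Then the strong chromatic number is $\overline{\psi}(\mathcal{H})=4n$.
   Context: $D_n=\langle x,y\mid x^n=y^2=1,\ xy=yx^{-1}\rangle$. $M(D_n,2)=\{(g,\alpha): g\in D_n,\ \alpha\in\mathbb{Z}_2\}$ with $(g_1,\alpha_1)\circ(g_2,\alpha_2)=(g_1^{1-\alpha_2} g_2^{(-1)^{\alpha_1}} g_1^{\alpha_2},\ \alpha_1+\alpha_2)$. The associating hypergraph $\mathcal{H}$ has vertex set $M(D_n,2)$ ($4n$ vertices), and a 3-element set $\{a,b,c\}$ of distinct elements is a hyperedge when $(a\circ b)\circ c=a\circ(b\circ c)$. A strong coloring assigns colors to vertices so that any two vertices lying in a common hyperedge receive different colors; $\overline{\psi}(\mathcal{H})$ is the minimum number of colors in a strong coloring. *)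

theory Defs
  imports Main
begin

text \<open>Dihedral group D_n of order 2n: the element (k, s) stands for x^k y^s,
  with k in {0..<n} and s = True meaning y^1.  Relations x^n = y^2 = 1, xy = yx^{-1}
  give x^a y^s * x^b y^t = x^(a + (-1)^s b) y^(s+t).\<close>

type_synonym dih = "nat \<times> bool"

definition dih_carrier :: "nat \<Rightarrow> dih set" where
  "dih_carrier n = {0..<n} \<times> (UNIV :: bool set)"

definition dih_one :: dih where
  "dih_one = (0, False)"

definition dih_mult :: "nat \<Rightarrow> dih \<Rightarrow> dih \<Rightarrow> dih" where
  "dih_mult n g h = (case g of (a, s) \<Rightarrow> case h of (b, t) \<Rightarrow>
      ((a + (if s then n - b else b)) mod n, s \<noteq> t))"

definition dih_inv :: "nat \<Rightarrow> dih \<Rightarrow> dih" where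
  "dih_inv n g = (case g of (a, s) \<Rightarrow> if s then (a, s) else ((n - a) mod n, False))"

text \<open>M(D_n,2): pairs (g, alpha) with alpha in Z_2 (True = 1), and
  (g1,a1) o (g2,a2) = (g1^(1-a2) g2^((-1)^a1) g1^a2, a1 + a2).\<close>

type_synonym mvert = "dih \<times> bool"

definition M_carrier :: "nat \<Rightarrow> mvert set" where
  "M_carrier n = dih_carrier n \<times> (UNIV :: bool set)"

definition M_op :: "nat \<Rightarrow> mvert \<Rightarrow> mvert \<Rightarrow> mvert" where
  "M_op n p q = (case p of (g1, a1) \<Rightarrow> case q of (g2, a2) \<Rightarrow>
     (dih_mult n (dih_mult n (if a2 then dih_one else g1) (if a1 then dih_inv n g2 else g2))
                 (if a2 then g1 else dih_one),
      a1 \<noteq> a2))"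

definition assoc_hyperedges :: "nat \<Rightarrow> mvert set set" where
  "assoc_hyperedges n = {{a, b, c} | a b c.
     a \<in> M_carrier n \<and> b \<in> M_carrier n \<and> c \<in> M_carrier n \<and>
     a \<noteq> b \<and> a \<noteq> c \<and> b \<noteq> c \<and>
     M_op n (M_op n a b) c = M_op n a (M_op n b c)}"

definition strong_coloring :: "'v set \<Rightarrow> 'v set set \<Rightarrow> ('v \<Rightarrow> nat) \<Rightarrow> bool" where
  "strong_coloring V E col \<longleftrightarrow>
     (\<forall>e\<in>E. \<forall>u\<in>e. \<forall>v\<in>e. u \<noteq> v \<longrightarrow> col u \<noteq> col v)"

definition strong_chromatic_number :: "'v set \<Rightarrow> 'v set set \<Rightarrow> nat" where
  "strong_chromatic_number V E =
     (LEAST k. \<exists>col. strong_coloring V E col \<and> card (col ` V) = k)"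

end

theory Submission
  imports Defs
begin

definition eM :: mvert where "eM = (dih_one, False)"

lemma carrier_iff: "((a,s),t) \<in> M_carrier n \<longleftrightarrow> a < n"
  by (simp add: M_carrier_def dih_carrier_def)

lemma eM_in: "n > 0 \<Longrightarrow> eM \<in> M_carrier n"
  by (simp add: eM_def dih_one_def carrier_iff)

lemma left_id: "x \<in> M_carrier n \<Longrightarrow> M_op n eM x = x"
  by (cases x, auto simp: eM_def M_op_def dih_mult_def dih_one_def dih_inv_def carrier_iff)

lemma right_id: "n > 0 \<Longrightarrow> x \<in> M_carrier n \<Longrightarrow> M_op n x eM = x"
  by (cases x, auto simp: eM_def M_op_def dih_mult_def dih_one_def dih_inv_def carrier_iff)

lemma card_M: "card (M_carrier n) = 4 * n"
  by (simp add: M_carrier_def dih_carrier_def card_cartesian_product)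

lemma finite_M: "finite (M_carrier n)"
  by (simp add: M_carrier_def dih_carrier_def)

lemma pair_edge:
  assumes n: "n \<ge> 3" and u: "u \<in> M_carrier n" and v: "v \<in> M_carrier n" and uv: "u \<noteq> v"
  shows "\<exists>e\<in>assoc_hyperedges n. u \<in> e \<and> v \<in> e"
proof -
  have n0: "n > 0" using n by simp
  have gen: "{x, y, eM} \<in> assoc_hyperedges n"
    if "x \<in> M_carrier n" "y \<in> M_carrier n" "x \<noteq> y" "x \<noteq> eM" "y \<noteq> eM" for x y
  proof -
    have "M_op n x y \<in> M_carrier n"
      using that by (cases x; cases y; auto simp: M_op_def dih_mult_def dih_one_def dih_inv_def carrier_iff M_carrier_def dih_carrier_def split: prod.splits)
    hence "M_op n (M_op n x y) eM = M_op n x (M_op n y eM)"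
      using right_id[OF n0] that by simp
    thus ?thesis unfolding assoc_hyperedges_def using that eM_in[OF n0] by blast
  qed
  show ?thesis
  proof (cases "u = eM \<or> v = eM")
    case False
    thus ?thesis using gen[OF u v uv] by auto
  next
    case True
    have "card (M_carrier n - {u, v}) > 0"
    proof -
      have "card (M_carrier n - {u,v}) = card (M_carrier n) - card {u,v}"
        using u v finite_M by (intro card_Diff_subset) auto
      thus ?thesis using card_M[of n] n uv by simp
    qed
    then obtain w where w: "w \<in> M_carrier n" "w \<noteq> u" "w \<noteq> v"
      by (metis DiffE card_gt_0_iff ex_in_conv insertCI)
    show ?thesis
    proof (cases "u = eM")
      case True
      have "{v, w, eM} \<in> assoc_hyperedges n" using gen[OF v w(1)] w uv True by auto
      thus ?thesis using True by (intro bexI[of _ "{v, w, eM}"]) auto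
    next
      case False
      hence "v = eM" using \<open>u = eM \<or> v = eM\<close> by simp
      have "{u, w, eM} \<in> assoc_hyperedges n" using gen[OF u w(1)] w uv False \<open>v = eM\<close> by auto
      thus ?thesis using \<open>v = eM\<close> by (intro bexI[of _ "{u, w, eM}"]) auto
    qed
  qed
qed

lemma coloring_inj:
  assumes "n \<ge> 3" "strong_coloring (M_carrier n) (assoc_hyperedges n) col"
  shows "inj_on col (M_carrier n)"
proof (rule inj_onI, rule ccontr)
  fix u v assume "u \<in> M_carrier n" "v \<in> M_carrier n" "col u = col v" "u \<noteq> v"
  then obtain e where "e \<in> assoc_hyperedges n" "u \<in> e" "v \<in> e" using pair_edge assms(1) by blast
  thus False using assms(2) \<open>col u = col v\<close> \<open>u \<noteq> v\<close> unfolding strong_coloring_def by blast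
qed

definition enc :: "mvert \<Rightarrow> nat" where
  "enc x = (case x of ((a,s),t) \<Rightarrow> 4 * a + (if s then 2 else 0) + (if t then 1 else 0))"

lemma enc_inj: "inj enc"
  by (rule injI) (auto simp: enc_def split: prod.splits if_splits; presburger)

theorem mainTheorem9:
  fixes n :: nat
  assumes "n \<ge> 3"
  shows "strong_chromatic_number (M_carrier n) (assoc_hyperedges n) = 4 * n"
proof -
  have all: "card (col ` M_carrier n) = 4 * n"
    if "strong_coloring (M_carrier n) (assoc_hyperedges n) col" for col
    using coloring_inj[OF assms that] card_image card_M by metis
  have ex: "strong_coloring (M_carrier n) (assoc_hyperedges n) enc"
    unfolding strong_coloring_def using enc_inj by (auto dest: injD)
  show ?thesis unfolding strong_chromatic_number_def
    by (rule Least_equality) (use all ex in auto)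
qed

end
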